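(* Let $Q$ be an $n\times n$ real symmetric matrix, $\Delta_n := \{x \in \mathbb{R}^n : x \ge 0,\ \sum_{j} x_j = 1\}$, and $\nu(Q) := \min_{x\in\Delta_n} x^TQx$. Let $\ell \in \mathbb{R}$ be any lower bound on $\nu(Q)$, and define $M_j = \max_{i=1,\ldots,n} Q_{ij} - \ell$ for $j=1,\ldots,n$. Let $U_1,\ldots,U_n$ satisfy $U_j \ge M_j$ for all $j$. Consider the mixed integer linear program (MILP2) in variables $x, z \in \mathbb{R}^n$, $y \in \{0,1\}^n$, $\alpha \in \mathbb{R}$: \[ \min\ \alpha \quad \text{s.t.}\quad e_j^TQx \le \alpha + z_j\ (j=1,\ldots,n),\quad e^Tx = 1,\quad x_j \le y_j\ (j=1,\ldots,n),\quad z_j \le U_j(1-y_j)\ (j=1,\ldots,n),\quad x \ge 0,\ z \ge 0,\ y_j \in \{0,1\}\ (j=1,\ldots,n), \] where $e_j$ is the $j$-th unit vector and $e$ the all-ones vector. Then (MILP2) is an equivalent reformulation of the problem $\min\{x^TQx : x \in \Delta_n\}$; in particular, the optimal value of (MILP2) equals $\nu(Q)$. *)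

theory Defs
  imports "HOL-Analysis.Analysis"
begin

text \<open>Standard simplex \<Delta>_n in R^n (index type 'n, n = CARD('n)).\<close>
definition std_simplex :: "(real^'n) set" where
  "std_simplex = {x. (\<forall>j. 0 \<le> x $ j) \<and> (\<Sum>j\<in>UNIV. x $ j) = 1}"

definition qform :: "real^'n^'n \<Rightarrow> real^'n \<Rightarrow> real" where
  "qform Q x = x \<bullet> (Q *v x)"

text \<open>nu(Q) = min over the simplex of x^T Q x (the minimum is attained by compactness).\<close>
definition nu :: "real^'n^'n \<Rightarrow> real" where
  "nu Q = Inf (qform Q ` std_simplex)"

definition bigM :: "real^'n^'n \<Rightarrow> real \<Rightarrow> 'n \<Rightarrow> real" where
  "bigM Q l j = Max (range (\<lambda>i. Q $ i $ j)) - l"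

text \<open>Feasibility for (MILP2) in variables x, z, y, alpha.  Note e_j^T Q x = (Q x)_j.\<close>
definition milp2_feasible ::
  "real^'n^'n \<Rightarrow> real^'n \<Rightarrow> real^'n \<Rightarrow> real^'n \<Rightarrow> real^'n \<Rightarrow> real \<Rightarrow> bool" where
  "milp2_feasible Q U x z y \<alpha> \<longleftrightarrow>
     (\<forall>j. (Q *v x) $ j \<le> \<alpha> + z $ j) \<and>
     (\<Sum>j\<in>UNIV. x $ j) = 1 \<and>
     (\<forall>j. x $ j \<le> y $ j) \<and>
     (\<forall>j. z $ j \<le> U $ j * (1 - y $ j)) \<and>
     (\<forall>j. 0 \<le> x $ j) \<and> (\<forall>j. 0 \<le> z $ j) \<and>
     (\<forall>j. y $ j \<in> {0, 1})"

definition milp2_value :: "real^'n^'n \<Rightarrow> real^'n \<Rightarrow> real" where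
  "milp2_value Q U = Inf {\<alpha>. \<exists>x z y. milp2_feasible Q U x z y \<alpha>}"

end

theory Submission
  imports Defs
begin

lemma qform_sum: "qform Q x = (\<Sum>j\<in>UNIV. x $ j * (Q *v x) $ j)"
  unfolding qform_def inner_vec_def by simp

lemma simplex_compact: "compact (std_simplex :: (real^'n) set)"
proof -
  have eq: "(std_simplex :: (real^'n) set) = (\<Inter>j. {x. x $ j \<ge> 0}) \<inter> {x. (\<Sum>j\<in>UNIV. x $ j) = 1}"
    unfolding std_simplex_def by auto
  have c1: "closed (\<Inter>j. {x::real^'n. x $ j \<ge> 0})"
    by (intro closed_INT ballI closed_halfspace_component_ge_cart)
  have c2: "closed {x::real^'n. (\<Sum>j\<in>UNIV. x $ j) = 1}"
    by (intro closed_Collect_eq continuous_intros)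
  have b: "bounded (std_simplex :: (real^'n) set)"
  proof -
    have "norm x \<le> 1" if "x \<in> std_simplex" for x :: "real^'n"
    proof -
      have "norm x \<le> (\<Sum>j\<in>UNIV. \<bar>x $ j\<bar>)" by (rule norm_le_l1_cart)
      also have "\<dots> = (\<Sum>j\<in>UNIV. x $ j)" using that unfolding std_simplex_def by simp
      finally show ?thesis using that unfolding std_simplex_def by simp
    qed
    then show ?thesis unfolding bounded_iff by blast
  qed
  show ?thesis using c1 c2 b eq by (metis closed_Int compact_eq_bounded_closed)
qed

lemma simplex_nonempty: "(std_simplex :: (real^'n) set) \<noteq> {}"
proof -
  have "(\<chi> j. 1 / real CARD('n)) \<in> (std_simplex :: (real^'n) set)"
    unfolding std_simplex_def by simp
  then show ?thesis by blast
qed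

lemma qform_cont: "continuous_on S (qform Q)"
  unfolding qform_def by (intro continuous_intros linear_continuous_on bounded_linear_intros)

lemma qform_expand:
  fixes Q :: "real^'n^'n"
  assumes symm: "transpose Q = Q"
  shows "qform Q (x + t *\<^sub>R d) = qform Q x + 2 * t * (d \<bullet> (Q *v x)) + t^2 * (d \<bullet> (Q *v d))"
proof -
  have s: "x \<bullet> (Q *v d) = d \<bullet> (Q *v x)"
  proof -
    have "x \<bullet> (Q *v d) = (x v* Q) \<bullet> d" by (simp add: dot_lmul_matrix)
    also have "x v* Q = Q *v x" by (metis symm transpose_matrix_vector)
    finally show ?thesis by (simp add: inner_commute)
  qed
  show ?thesis unfolding qform_def
    by (simp add: matrix_vector_right_distrib matrix_vector_mult_scaleR inner_add_left
        inner_add_right s power2_eq_square algebra_simps)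
qed

lemma kkt:
  fixes Q :: "real^'n^'n"
  assumes symm: "transpose Q = Q" and xs: "x \<in> std_simplex"
    and opt: "\<forall>w\<in>std_simplex. qform Q x \<le> qform Q w"
    and pos: "x $ j > 0"
  shows "(Q *v x) $ j \<le> (Q *v x) $ k"
proof (rule ccontr)
  assume "\<not> ?thesis"
  hence kj: "k \<noteq> j" and aneg: "(Q *v x) $ k - (Q *v x) $ j < 0" by auto
  define d :: "real^'n" where "d = axis k 1 - axis j 1"
  define a where "a = (Q *v x) $ k - (Q *v x) $ j"
  define b where "b = d \<bullet> (Q *v d)"
  have da: "d \<bullet> (Q *v x) = a" unfolding d_def a_def by (simp add: inner_diff_left inner_axis')
  define t where "t = min (x $ j) (- a / (\<bar>b\<bar> + 1))"
  have a0: "a < 0" using aneg a_def by simp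
  have t0: "t > 0" unfolding t_def using pos a0 divide_neg_pos[of a "\<bar>b\<bar> + 1"] by auto
  have tj: "t \<le> x $ j" unfolding t_def by simp
  have tb: "t * \<bar>b\<bar> < - a"
  proof -
    have "t * \<bar>b\<bar> \<le> (- a / (\<bar>b\<bar> + 1)) * \<bar>b\<bar>" unfolding t_def
      by (intro mult_right_mono) auto
    also have "\<dots> < - a" using a0 by (simp add: field_simps)
    finally show ?thesis .
  qed
  have ws: "x + t *\<^sub>R d \<in> std_simplex"
  proof -
    have c: "(x + t *\<^sub>R d) $ i = x $ i + (if i = k then t else 0) - (if i = j then t else 0)" for i
      unfolding d_def by (auto simp: axis_def)
    have "0 \<le> (x + t *\<^sub>R d) $ i" for i
      using xs tj t0 kj unfolding c std_simplex_def by auto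
    moreover have "(\<Sum>i\<in>UNIV. (x + t *\<^sub>R d) $ i) = 1"
      using xs unfolding c std_simplex_def by (simp add: sum.distrib sum_subtractf)
    ultimately show ?thesis unfolding std_simplex_def by simp
  qed
  have "qform Q (x + t *\<^sub>R d) = qform Q x + t * (2 * a + t * b)"
    using qform_expand[OF symm, of x t d] da b_def by (simp add: power2_eq_square algebra_simps)
  moreover have "t * (2 * a + t * b) < 0"
  proof -
    have "t * b \<le> t * \<bar>b\<bar>" using t0 by (intro mult_left_mono) auto
    hence "2 * a + t * b < 0" using tb a0 by linarith
    thus ?thesis using t0 by (simp add: mult_pos_neg)
  qed
  ultimately show False using opt ws by force
qed


lemma feas_bound:
  assumes f: "milp2_feasible Q U x z y \<alpha>"
  shows "x \<in> std_simplex \<and> qform Q x \<le> \<alpha>"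
proof -
  have xs: "x \<in> std_simplex" using f unfolding milp2_feasible_def std_simplex_def by auto
  have "x $ j * (Q *v x) $ j \<le> x $ j * \<alpha>" for j
  proof (cases "x $ j = 0")
    case False
    with f have xp: "x $ j > 0" unfolding milp2_feasible_def by (metis less_eq_real_def)
    with f have "y $ j = 1" unfolding milp2_feasible_def by (metis empty_iff insert_iff not_less)
    with f have "z $ j = 0" unfolding milp2_feasible_def by (metis antisym diff_self mult_zero_right)
    with f have "(Q *v x) $ j \<le> \<alpha>" unfolding milp2_feasible_def by (metis add.right_neutral)
    then show ?thesis using xp by simp
  qed simp
  then have "qform Q x \<le> (\<Sum>j\<in>UNIV. x $ j * \<alpha>)" unfolding qform_sum by (intro sum_mono) auto
  also have "\<dots> = \<alpha>" using xs unfolding std_simplex_def by (simp add: sum_distrib_right[symmetric])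
  finally show ?thesis using xs by simp
qed

lemma opt_feas:
  fixes Q :: "real^'n^'n"
  assumes symm: "transpose Q = Q" and xs: "x \<in> std_simplex"
    and opt: "\<forall>w\<in>std_simplex. qform Q x \<le> qform Q w"
    and lm: "l \<le> qform Q x"
    and U_ge: "\<forall>j. U $ j \<ge> bigM Q l j"
  shows "\<exists>z y. milp2_feasible Q U x z y (qform Q x)"
proof -
  define m where "m = qform Q x"
  have x0: "0 \<le> x $ i" for i using xs unfolding std_simplex_def by auto
  have xsum: "(\<Sum>i\<in>UNIV. x $ i) = 1" using xs unfolding std_simplex_def by auto
  have kk: "x $ i > 0 \<Longrightarrow> (Q *v x) $ i \<le> (Q *v x) $ k" for i k
    using kkt[OF symm xs opt] by blast
  have A: "m \<le> (Q *v x) $ k" for k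
  proof -
    have "m \<le> (\<Sum>i\<in>UNIV. x $ i * (Q *v x) $ k)" unfolding m_def qform_sum
      using kk x0 by (intro sum_mono) (metis less_eq_real_def mult_left_mono mult_zero_left)
    also have "\<dots> = (Q *v x) $ k" using xsum by (simp add: sum_distrib_right[symmetric])
    finally show ?thesis .
  qed
  have B: "(Q *v x) $ j \<le> m" if "x $ j > 0" for j
  proof -
    have "(Q *v x) $ j = (\<Sum>i\<in>UNIV. x $ i * (Q *v x) $ j)" using xsum by (simp add: sum_distrib_right[symmetric])
    also have "\<dots> \<le> (\<Sum>i\<in>UNIV. x $ i * (Q *v x) $ i)"
      using kk[OF that] x0 by (intro sum_mono mult_left_mono) auto
    finally show ?thesis unfolding m_def qform_sum .
  qed
  have C: "(Q *v x) $ j \<le> Max (range (\<lambda>i. Q $ i $ j))" for j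
  proof -
    have "(Q *v x) $ j = (\<Sum>i\<in>UNIV. Q $ j $ i * x $ i)" by (simp add: matrix_vector_mult_def)
    also have "\<dots> \<le> (\<Sum>i\<in>UNIV. Max (range (\<lambda>i. Q $ i $ j)) * x $ i)"
    proof (intro sum_mono mult_right_mono)
      fix i
      have "Q $ j $ i = transpose Q $ i $ j" by (simp add: transpose_def)
      also have "\<dots> = Q $ i $ j" using symm by simp
      finally show "Q $ j $ i \<le> Max (range (\<lambda>i. Q $ i $ j))" by simp
    qed (use x0 in auto)
    also have "\<dots> = Max (range (\<lambda>i. Q $ i $ j))" using xsum by (simp add: sum_distrib_left[symmetric])
    finally show ?thesis .
  qed
  define y :: "real^'n" where "y = (\<chi> j. if x $ j > 0 then 1 else 0)"
  define z :: "real^'n" where "z = (\<chi> j. if x $ j > 0 then 0 else (Q *v x) $ j - m)"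
  have x1: "x $ j \<le> 1" for j
    using xsum member_le_sum[of j UNIV "\<lambda>i. x $ i"] x0 by auto
  have "milp2_feasible Q U x z y m"
    unfolding milp2_feasible_def
  proof (intro conjI allI)
    fix j
    show "(Q *v x) $ j \<le> m + z $ j" using B[of j] unfolding z_def by auto
    show "x $ j \<le> y $ j" using x1[of j] x0[of j] unfolding y_def by auto
    have "Max (range (\<lambda>i. Q $ i $ j)) - l \<le> U $ j" using U_ge unfolding bigM_def by blast
    then show "z $ j \<le> U $ j * (1 - y $ j)" using C[of j] lm unfolding z_def y_def m_def
      by auto
    show "0 \<le> x $ j" by (rule x0)
    show "0 \<le> z $ j" using A[of j] unfolding z_def by auto
    show "y $ j \<in> {0, 1}" unfolding y_def by auto
  qed (rule xsum)
  then show ?thesis unfolding m_def by blast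
qed

theorem proposition2:
  fixes Q :: "real^'n^'n" and l :: real and U :: "real^'n"
  assumes symm: "transpose Q = Q"
    and lower: "\<forall>x\<in>std_simplex. l \<le> qform Q x"
    and U_ge: "\<forall>j. U $ j \<ge> bigM Q l j"
  shows "milp2_value Q U = nu Q
    \<and> (\<exists>x z y. milp2_feasible Q U x z y (nu Q))
    \<and> (\<forall>x z y \<alpha>. milp2_feasible Q U x z y \<alpha> \<longrightarrow> nu Q \<le> \<alpha>)
    \<and> (\<forall>x z y. milp2_feasible Q U x z y (nu Q) \<longrightarrow>
          x \<in> std_simplex \<and> qform Q x = nu Q)
    \<and> (\<forall>x\<in>std_simplex. qform Q x = nu Q \<longrightarrow>
          (\<exists>z y. milp2_feasible Q U x z y (nu Q)))"
proof -
  obtain x0 where x0s: "x0 \<in> std_simplex" and x0m: "\<forall>w\<in>std_simplex. qform Q x0 \<le> qform Q w"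
    using continuous_attains_inf[OF simplex_compact simplex_nonempty qform_cont] by blast
  have nuq: "nu Q = qform Q x0" unfolding nu_def
    using x0s x0m by (intro cInf_eq_minimum) auto
  have nu_le: "\<forall>w\<in>std_simplex. nu Q \<le> qform Q w" using nuq x0m by simp
  have P3: "\<forall>x z y \<alpha>. milp2_feasible Q U x z y \<alpha> \<longrightarrow> nu Q \<le> \<alpha>"
    using feas_bound nu_le by (meson order_trans)
  have P4: "\<forall>x z y. milp2_feasible Q U x z y (nu Q) \<longrightarrow> x \<in> std_simplex \<and> qform Q x = nu Q"
    using feas_bound nu_le by (meson antisym)
  have P5: "\<forall>x\<in>std_simplex. qform Q x = nu Q \<longrightarrow> (\<exists>z y. milp2_feasible Q U x z y (nu Q))"
  proof (intro ballI impI)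
    fix x assume xs: "x \<in> std_simplex" and e: "qform Q x = nu Q"
    have "\<exists>z y. milp2_feasible Q U x z y (qform Q x)"
      using opt_feas[OF symm xs _ _ U_ge] e nu_le lower xs by auto
    then show "\<exists>z y. milp2_feasible Q U x z y (nu Q)" using e by simp
  qed
  have P2: "\<exists>x z y. milp2_feasible Q U x z y (nu Q)" using P5 x0s nuq by metis
  have P1: "milp2_value Q U = nu Q" unfolding milp2_value_def
    using P2 P3 by (intro cInf_eq_minimum) auto
  show ?thesis using P1 P2 P3 P4 P5 by blast
qed

end
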